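(* Let $G_1$ be a graph on $n$ nodes with Laplacian $Q_1$, and for $p\ge 0$ let $$Q(p)=\begin{bmatrix} Q_1+p(n-1)I & -p(J-I)\\ -p(J-I) & Q_1+p(n-1)I\end{bmatrix},$$ where $J$ is the $n\times n$ all-one matrix (two copies of $G_1$ coupled by an $(n-1)$-to-$(n-1)$ interconnection $B=p(J-I)$), with eigenvalues $0=\mu_N(p)\le\mu_{N-1}(p)\le\dots\le\mu_1(p)$, $N=2n$. Define $p^*=\sup\big(\{0\}\cup\{p>0:\ \mu_{N-1}(p)=2(n-1)p\}\big)$. Then $$p^*=\frac{\mu_{n-1}(Q_1)}{n},$$ where $\mu_{n-1}(Q_1)$ is the second smallest eigenvalue of $Q_1$.
   Context: $2(n-1)p$ is an eigenvalue of $Q(p)$ with eigenvector $[u^T,-u^T]^T$, $u$ the all-one vector; $p^*$ is the structural transition threshold, described in the paper as the coupling beyond which the algebraic connectivity $\mu_{N-1}$ no longer equals $2(n-1)p$ (formalized here as the supremum). *)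

theory Defs
  imports "Jordan_Normal_Form.Char_Poly" "HOL-Library.Multiset"
begin

text \<open>For the real
  symmetric matrices considered here all eigenvalues are real.\<close>
definition asc_eigs :: "real mat \<Rightarrow> real list" where
  "asc_eigs A = sorted_list_of_multiset (proots (char_poly A))"

definition second_smallest_eig :: "real mat \<Rightarrow> real" where
  "second_smallest_eig A = asc_eigs A ! 1"

definition simple_graph :: "nat \<Rightarrow> (nat \<Rightarrow> nat \<Rightarrow> bool) \<Rightarrow> bool" where
  "simple_graph n E \<longleftrightarrow> (\<forall>i<n. \<not> E i i) \<and> (\<forall>i<n. \<forall>j<n. E i j \<longleftrightarrow> E j i)"

definition laplacian :: "nat \<Rightarrow> (nat \<Rightarrow> nat \<Rightarrow> bool) \<Rightarrow> real mat" where
  "laplacian n E = mat n n (\<lambda>(i,j).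
     if i = j then real (card {k. k < n \<and> E i k}) else if E i j then -1 else 0)"

definition all_ones :: "nat \<Rightarrow> real mat" where
  "all_ones n = mat n n (\<lambda>_. 1)"

definition coupled_Q :: "nat \<Rightarrow> (nat \<Rightarrow> nat \<Rightarrow> bool) \<Rightarrow> real \<Rightarrow> real mat" where
  "coupled_Q n E p =
     (let Q1 = laplacian n E;
          Dg = Q1 + (p * (real n - 1)) \<cdot>\<^sub>m 1\<^sub>m n;
          Bc = - (p \<cdot>\<^sub>m (all_ones n - 1\<^sub>m n))
      in four_block_mat Dg Bc Bc Dg)"

definition p_star :: "nat \<Rightarrow> (nat \<Rightarrow> nat \<Rightarrow> bool) \<Rightarrow> real" where
  "p_star n E = Sup ({0} \<union> {p. p > 0 \<and>
      second_smallest_eig (coupled_Q n E p) = 2 * (real n - 1) * p})"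

end

theory Submission
  imports Defs
begin


lemma char_poly_four_block_ll0:
  fixes A1 :: "'a :: idom mat"
  assumes A1: "A1 \<in> carrier_mat n n" and A2: "A2 \<in> carrier_mat n m" and A4: "A4 \<in> carrier_mat m m"
  shows "char_poly (four_block_mat A1 A2 (0\<^sub>m m n) A4) = char_poly A1 * char_poly A4"
proof -
  let ?cm = "\<lambda> A. [:0, 1:] \<cdot>\<^sub>m 1\<^sub>m (dim_row A) + map_mat (\<lambda>a. [:- a:]) A"
  let ?B2 = "map_mat (\<lambda>a. [:- a:]) A2"
  have "char_poly (four_block_mat A1 A2 (0\<^sub>m m n) A4) = det (?cm (four_block_mat A1 A2 (0\<^sub>m m n) A4))"
    unfolding char_poly_defs using A1 A4 by simp
  also have "?cm (four_block_mat A1 A2 (0\<^sub>m m n) A4) = four_block_mat (?cm A1) ?B2 (0\<^sub>m m n) (?cm A4)"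
    by (rule eq_matI, insert A1 A2 A4, auto simp: one_poly_def)
  also have "det \<dots> = det (?cm A1) * det (?cm A4)"
    by (rule det_four_block_mat_lower_left_zero[OF _ _ refl], insert A1 A2 A4, auto)
  also have "\<dots> = char_poly A1 * char_poly A4" unfolding char_poly_defs ..
  finally show ?thesis .
qed

lemma char_poly_sym_block:
  fixes D B :: "'a :: idom mat"
  assumes D: "D \<in> carrier_mat n n" and B: "B \<in> carrier_mat n n"
  shows "char_poly (four_block_mat D B B D) = char_poly (D + B) * char_poly (D - B)"
proof -
  define T :: "'a mat" where "T = four_block_mat (1\<^sub>m n) (0\<^sub>m n n) (1\<^sub>m n) (1\<^sub>m n)"
  define Ti :: "'a mat" where "Ti = four_block_mat (1\<^sub>m n) (0\<^sub>m n n) (- 1\<^sub>m n) (1\<^sub>m n)"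
  define M where "M = four_block_mat (D + B) B (0\<^sub>m n n) (D - B)"
  have T: "T \<in> carrier_mat (n+n) (n+n)" and Ti: "Ti \<in> carrier_mat (n+n) (n+n)"
    and M: "M \<in> carrier_mat (n+n) (n+n)"
    using D B by (auto simp: T_def Ti_def M_def)
  have "T * Ti = four_block_mat (1\<^sub>m n) (0\<^sub>m n n) (0\<^sub>m n n) (1\<^sub>m n)"
    unfolding T_def Ti_def
    by (subst mult_four_block_mat[of _ n n _ n _ n], auto intro!: cong_four_block_mat eq_matI)
  hence TTi: "T * Ti = 1\<^sub>m (n+n)" by simp
  have "Ti * T = four_block_mat (1\<^sub>m n) (0\<^sub>m n n) (0\<^sub>m n n) (1\<^sub>m n)"
    unfolding T_def Ti_def
    by (subst mult_four_block_mat[of _ n n _ n _ n], auto intro!: cong_four_block_mat eq_matI)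
  hence TiT: "Ti * T = 1\<^sub>m (n+n)" by simp
  have "T * M = four_block_mat (D + B) B (D + B) D"
    unfolding T_def M_def using D B
    by (subst mult_four_block_mat[of _ n n _ n _ n], auto intro!: cong_four_block_mat eq_matI)
  hence "T * M * Ti = four_block_mat (D + B) B (D + B) D * Ti" by simp
  also have "\<dots> = four_block_mat D B B D"
    unfolding Ti_def using D B
    by (subst mult_four_block_mat[of _ n n _ n _ n], auto intro!: cong_four_block_mat eq_matI)
  finally have eq: "four_block_mat D B B D = T * M * Ti" by simp
  have "similar_mat (four_block_mat D B B D) M"
    by (rule similar_matI[OF _ TTi TiT eq], insert T Ti M D B, auto)
  hence "char_poly (four_block_mat D B B D) = char_poly M" by (rule char_poly_similar)
  also have "\<dots> = char_poly (D + B) * char_poly (D - B)"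
    unfolding M_def by (rule char_poly_four_block_ll0, insert D B, auto)
  finally show ?thesis .
qed

lemma sumS_left:
  fixes f :: "nat \<Rightarrow> 'a :: comm_ring_1"
  assumes "i < n" "0 < n"
  shows "(\<Sum>k\<in>{0..<n}. (if k = 0 \<or> i = k then 1 else 0) * f k) = f 0 + (if i \<noteq> 0 then f i else 0)"
proof -
  have "(\<Sum>k\<in>{0..<n}. (if k = 0 \<or> i = k then 1 else 0) * f k) = (\<Sum>k\<in>{0..<n}. if k \<in> {0, i} then f k else 0)"
    by (rule sum.cong, auto)
  also have "\<dots> = sum f ({0..<n} \<inter> {0, i})" by (rule sum.inter_restrict[symmetric], simp)
  also have "{0..<n} \<inter> {0, i} = {0, i}" using assms by auto
  finally show ?thesis by auto
qed

lemma sumSi_left: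
  fixes f :: "nat \<Rightarrow> 'a :: comm_ring_1"
  assumes "i < n" "0 < n"
  shows "(\<Sum>k\<in>{0..<n}. (if i = k then 1 else if k = 0 then -1 else 0) * f k) = f i - (if i \<noteq> 0 then f 0 else 0)"
proof (cases "i = 0")
  case True
  have "(\<Sum>k\<in>{0..<n}. (if i = k then 1 else if k = 0 then -1 else 0) * f k) = (\<Sum>k\<in>{0..<n}. if k \<in> {0} then f k else 0)"
    by (rule sum.cong, auto simp: True)
  also have "\<dots> = sum f ({0..<n} \<inter> {0})" by (rule sum.inter_restrict[symmetric], simp)
  also have "{0..<n} \<inter> {0} = {0}" using assms by auto
  finally show ?thesis using True by auto
next
  case False
  have "(\<Sum>k\<in>{0..<n}. (if i = k then 1 else if k = 0 then -1 else 0) * f k) = (\<Sum>k\<in>{0..<n}. if k \<in> {0, i} then (if k = i then f k else - f k) else 0)"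
    by (rule sum.cong, auto)
  also have "\<dots> = (\<Sum>k\<in>{0..<n} \<inter> {0, i}. (if k = i then f k else - f k))" by (rule sum.inter_restrict[symmetric], simp)
  also have "{0..<n} \<inter> {0, i} = {0, i}" using assms by auto
  finally show ?thesis using False by auto
qed

lemma sumS_right:
  fixes g :: "nat \<Rightarrow> 'a :: comm_ring_1"
  assumes "j < n"
  shows "(\<Sum>k\<in>{0..<n}. g k * (if j = 0 \<or> k = j then 1 else 0)) = (if j = 0 then sum g {0..<n} else g j)"
proof (cases "j = 0")
  case True thus ?thesis by simp
next
  case False
  have "(\<Sum>k\<in>{0..<n}. g k * (if j = 0 \<or> k = j then 1 else 0)) = (\<Sum>k\<in>{0..<n}. if k = j then g k else 0)"
    by (rule sum.cong, auto simp: False)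
  also have "\<dots> = g j" using assms by simp
  finally show ?thesis using False by simp
qed

lemma charpoly_shift_J:
  fixes A :: "real mat"
  assumes A: "A \<in> carrier_mat (Suc m) (Suc m)"
  and rs: "\<And>i. i < Suc m \<Longrightarrow> (\<Sum>j\<in>{0..<Suc m}. A $$ (i,j)) = 0"
  shows "char_poly (A + a \<cdot>\<^sub>m 1\<^sub>m (Suc m) + c \<cdot>\<^sub>m all_ones (Suc m)) =
    [:-(a + c * real (Suc m)), 1:] * char_poly (mat m m (\<lambda>(i,j). A $$ (Suc i, Suc j) - A $$ (0, Suc j)) + a \<cdot>\<^sub>m 1\<^sub>m m)"
proof -
  define n where "n = Suc m"
  have n0: "0 < n" unfolding n_def by simp
  define X where "X = A + a \<cdot>\<^sub>m 1\<^sub>m n + c \<cdot>\<^sub>m all_ones n"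
  define A' where "A' = mat m m (\<lambda>(i,j). A $$ (Suc i, Suc j) - A $$ (0, Suc j)) + a \<cdot>\<^sub>m 1\<^sub>m m"
  define M where "M = four_block_mat (mat 1 1 (\<lambda>_. a + c * real n)) (mat 1 m (\<lambda>(_,j). X $$ (0, Suc j))) (0\<^sub>m m 1) A'"
  define S :: "real mat" where "S = mat n n (\<lambda>(i,j). if j = 0 \<or> i = j then 1 else 0)"
  define Si :: "real mat" where "Si = mat n n (\<lambda>(i,j). if i = j then 1 else if j = 0 then -1 else 0)"
  have A'c: "A' \<in> carrier_mat m m" unfolding A'_def by auto
  have Xc: "X \<in> carrier_mat n n" using A unfolding X_def n_def all_ones_def by auto
  have Mc: "M \<in> carrier_mat n n" unfolding M_def n_def using A'c by auto
  have Sc: "S \<in> carrier_mat n n" "Si \<in> carrier_mat n n" unfolding S_def Si_def by auto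
  have X_ij: "X $$ (i,j) = A $$ (i,j) + (if i = j then a else 0) + c" if "i < n" "j < n" for i j
    using that A unfolding X_def all_ones_def n_def by auto
  have SSi: "S * Si = 1\<^sub>m n"
  proof (rule eq_matI)
    fix i j assume ij: "i < dim_row (1\<^sub>m n)" "j < dim_col (1\<^sub>m n)"
    have "(S * Si) $$ (i,j) = (\<Sum>k\<in>{0..<n}. (if k = 0 \<or> i = k then 1 else 0) * Si $$ (k, j))"
      using ij Sc unfolding S_def by (auto simp: scalar_prod_def intro!: sum.cong)
    also have "\<dots> = Si $$ (0,j) + (if i \<noteq> 0 then Si $$ (i,j) else 0)" by (rule sumS_left, insert ij n0, auto)
    also have "\<dots> = 1\<^sub>m n $$ (i,j)" using ij n0 unfolding Si_def by auto
    finally show "(S * Si) $$ (i,j) = 1\<^sub>m n $$ (i,j)" .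
  qed (insert Sc, auto)
  have SiS: "Si * S = 1\<^sub>m n"
  proof (rule eq_matI)
    fix i j assume ij: "i < dim_row (1\<^sub>m n)" "j < dim_col (1\<^sub>m n)"
    have "(Si * S) $$ (i,j) = (\<Sum>k\<in>{0..<n}. (if i = k then 1 else if k = 0 then -1 else 0) * S $$ (k, j))"
      using ij Sc unfolding Si_def by (auto simp: scalar_prod_def intro!: sum.cong)
    also have "\<dots> = S $$ (i,j) - (if i \<noteq> 0 then S $$ (0,j) else 0)" by (rule sumSi_left, insert ij n0, auto)
    also have "\<dots> = 1\<^sub>m n $$ (i,j)" using ij n0 unfolding S_def by auto
    finally show "(Si * S) $$ (i,j) = 1\<^sub>m n $$ (i,j)" .
  qed (insert Sc, auto)
  have rsX: "sum (\<lambda>k. X $$ (i,k)) {0..<n} = a + c * real n" if "i < n" for i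
  proof -
    have "sum (\<lambda>k. X $$ (i,k)) {0..<n} = (\<Sum>k\<in>{0..<n}. A $$ (i,k)) + (\<Sum>k\<in>{0..<n}. (if i = k then a else 0)) + (\<Sum>k\<in>{0..<n}. c)"
      using that by (simp add: X_ij sum.distrib)
    also have "\<dots> = a + c * real n" using rs[of i] that unfolding n_def by simp
    finally show ?thesis .
  qed
  have XS: "X * S = S * M"
  proof (rule eq_matI)
    fix i j assume ij: "i < dim_row (S * M)" "j < dim_col (S * M)"
    hence i: "i < n" and j: "j < n" using Sc Mc by auto
    have "(X * S) $$ (i,j) = (\<Sum>k\<in>{0..<n}. X $$ (i,k) * (if j = 0 \<or> k = j then 1 else 0))"
      using i j Sc Xc unfolding S_def by (auto simp: scalar_prod_def intro!: sum.cong)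
    also have "\<dots> = (if j = 0 then a + c * real n else X $$ (i,j))" by (subst sumS_right[OF j]) (simp add: rsX[OF i])
    finally have l: "(X * S) $$ (i,j) = (if j = 0 then a + c * real n else X $$ (i,j))" .
    have "(S * M) $$ (i,j) = (\<Sum>k\<in>{0..<n}. (if k = 0 \<or> i = k then 1 else 0) * M $$ (k, j))"
      using i j Sc Mc unfolding S_def by (auto simp: scalar_prod_def intro!: sum.cong)
    also have "\<dots> = M $$ (0,j) + (if i \<noteq> 0 then M $$ (i,j) else 0)" by (rule sumS_left, insert i n0, auto)
    finally have r: "(S * M) $$ (i,j) = M $$ (0,j) + (if i \<noteq> 0 then M $$ (i,j) else 0)" .
    show "(X * S) $$ (i,j) = (S * M) $$ (i,j)"
      unfolding l r using i j A'c
      by (cases i; cases j; auto simp: M_def A'_def X_ij n_def)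
  qed (insert Sc Mc Xc, auto)
  have XSM: "X = S * M * Si"
  proof -
    have "X = X * (S * Si)" using Xc SSi by simp
    also have "\<dots> = X * S * Si" using Xc Sc by (simp add: assoc_mult_mat)
    finally show ?thesis using XS by simp
  qed
  have "similar_mat X M"
    by (rule similar_matI[OF _ SSi SiS XSM], insert Xc Mc Sc, auto)
  hence "char_poly X = char_poly M" by (rule char_poly_similar)
  also have "\<dots> = char_poly (mat 1 1 (\<lambda>_. a + c * real n)) * char_poly A'"
    unfolding M_def by (rule char_poly_four_block_ll0, insert A'c, auto)
  also have "char_poly (mat 1 1 (\<lambda>_. a + c * real n)) = [:-(a + c * real n), 1:]"
    by (subst char_poly_upper_triangular[of _ 1], auto simp: upper_triangular_def diag_mat_def)
  finally show ?thesis unfolding X_def A'_def n_def .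
qed


lemma sym_real_eig:
  fixes A :: "real mat"
  assumes A: "A \<in> carrier_mat n n"
  and sym: "\<And>i j. i < n \<Longrightarrow> j < n \<Longrightarrow> A $$ (i,j) = A $$ (j,i)"
  and root: "poly (map_poly complex_of_real (char_poly A)) z = 0"
  shows "Im z = 0"
proof -
  define B where "B = map_mat complex_of_real A"
  have Bc: "B \<in> carrier_mat n n" using A unfolding B_def by auto
  have "char_poly B = map_poly complex_of_real (char_poly A)"
    unfolding B_def by (rule of_real_hom.char_poly_hom[OF A])
  hence "eigenvalue B z" using root eigenvalue_root_char_poly[OF Bc] by simp
  then obtain v where v: "v \<in> carrier_vec n" "v \<noteq> 0\<^sub>v n" "B *\<^sub>v v = z \<cdot>\<^sub>v v"
    unfolding eigenvalue_def eigenvector_def using Bc by auto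
  from v(1,2) obtain i0 where i0: "i0 < n" "v $ i0 \<noteq> 0" by (metis eq_vecI carrier_vecD index_zero_vec)
  define s where "s = (\<Sum>i\<in>{0..<n}. cnj (v $ i) * (B *\<^sub>v v) $ i)"
  define N where "N = (\<Sum>i\<in>{0..<n}. (cmod (v $ i))^2)"
  have Npos: "N > 0" unfolding N_def
    by (rule sum_pos2[of _ i0], insert i0, auto)
  have h: "\<And>x. cnj x * (z * x) = z * complex_of_real ((cmod x)^2)"
    by (metis complex_norm_square mult.commute mult.left_commute)
  have h2: "\<And>x. cnj x * x = (complex_of_real (cmod x))^2"
    by (metis complex_norm_square mult.commute of_real_power)
  have "s = (\<Sum>i\<in>{0..<n}. z * complex_of_real ((cmod (v $ i))^2))"
    unfolding s_def v(3)
  proof (intro sum.cong refl)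
    fix x assume "x \<in> {0..<n}"
    hence "(z \<cdot>\<^sub>v v) $ x = z * v $ x" using v(1) by auto
    thus "cnj (v $ x) * (z \<cdot>\<^sub>v v) $ x = z * complex_of_real ((cmod (v $ x))^2)" using h by metis
  qed
  also have "\<dots> = z * complex_of_real N" unfolding N_def by (simp add: sum_distrib_left)
  finally have s1: "s = z * complex_of_real N" .
  have s2: "s = (\<Sum>i\<in>{0..<n}. \<Sum>j\<in>{0..<n}. cnj (v $ i) * complex_of_real (A $$ (i,j)) * v $ j)"
    unfolding s_def
  proof (intro sum.cong refl)
    fix i assume i: "i \<in> {0..<n}"
    have "(B *\<^sub>v v) $ i = (\<Sum>j\<in>{0..<n}. complex_of_real (A $$ (i,j)) * v $ j)"
      using i Bc v(1) A by (auto simp: B_def scalar_prod_def)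
    thus "cnj (v $ i) * (B *\<^sub>v v) $ i = (\<Sum>j\<in>{0..<n}. cnj (v $ i) * complex_of_real (A $$ (i,j)) * v $ j)"
      by (simp add: sum_distrib_left mult.assoc)
  qed
  have "cnj s = (\<Sum>i\<in>{0..<n}. \<Sum>j\<in>{0..<n}. v $ i * complex_of_real (A $$ (i,j)) * cnj (v $ j))"
    unfolding s2 by (simp add: cnj_sum)
  also have "\<dots> = (\<Sum>j\<in>{0..<n}. \<Sum>i\<in>{0..<n}. v $ i * complex_of_real (A $$ (i,j)) * cnj (v $ j))"
    by (rule sum.swap)
  also have "\<dots> = s" unfolding s2
  proof (intro sum.cong refl)
    fix i j assume "i \<in> {0..<n}" "j \<in> {0..<n}"
    hence "A $$ (j,i) = A $$ (i,j)" using sym by auto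
    thus "v $ j * complex_of_real (A $$ (j, i)) * cnj (v $ i) = cnj (v $ i) * complex_of_real (A $$ (i, j)) * v $ j"
      by (simp add: mult.commute mult.left_commute)
  qed
  finally have "cnj s = s" .
  hence "Im (cnj s) = Im s" by simp
  hence "Im s = 0" by simp
  hence "Im z * N = 0" unfolding s1 by simp
  thus ?thesis using Npos by simp
qed


lemma lap_eig_nonneg:
  assumes G: "simple_graph n E" and ev: "eigenvalue (laplacian n E) lam"
  shows "lam \<ge> 0"
proof -
  define L where "L = laplacian n E"
  have Lc: "L \<in> carrier_mat n n" unfolding L_def laplacian_def by auto
  obtain v where v: "v \<in> carrier_vec n" "v \<noteq> 0\<^sub>v n" "L *\<^sub>v v = lam \<cdot>\<^sub>v v"
    using ev Lc unfolding eigenvalue_def eigenvector_def L_def by auto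
  from v(1,2) obtain i0 where i0: "i0 < n" "v $ i0 \<noteq> 0" by (metis eq_vecI carrier_vecD index_zero_vec)
  have irr: "\<And>i. i < n \<Longrightarrow> \<not> E i i" and symE: "\<And>i j. i < n \<Longrightarrow> j < n \<Longrightarrow> E i j = E j i"
    using G unfolding simple_graph_def by auto
  have Lv: "(L *\<^sub>v v) $ i = (\<Sum>j\<in>{0..<n}. if E i j then v $ i - v $ j else 0)" if i: "i < n" for i
  proof -
    have "(L *\<^sub>v v) $ i = (\<Sum>j\<in>{0..<n}. L $$ (i,j) * v $ j)"
      using i Lc v(1) by (auto simp: scalar_prod_def)
    also have "\<dots> = (\<Sum>j\<in>{0..<n}. (if i = j then real (card {k. k < n \<and> E i k}) * v $ i else 0) + (if E i j then - v $ j else 0))"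
      using i irr by (intro sum.cong refl, auto simp: L_def laplacian_def)
    also have "\<dots> = real (card {k. k < n \<and> E i k}) * v $ i + (\<Sum>j\<in>{0..<n}. if E i j then - v $ j else 0)"
      using i by (simp add: sum.distrib)
    also have "(\<Sum>j\<in>{0..<n}. if E i j then v $ i else 0) = real (card {k. k < n \<and> E i k}) * v $ i"
    proof -
      have "(\<Sum>j\<in>{0..<n}. if E i j then v $ i else 0) = (\<Sum>j\<in>{j\<in>{0..<n}. E i j}. v $ i)"
        by (rule sum.inter_filter[symmetric], simp)
      also have "{j\<in>{0..<n}. E i j} = {k. k < n \<and> E i k}" by auto
      finally show ?thesis by simp
    qed
    hence "real (card {k. k < n \<and> E i k}) * v $ i + (\<Sum>j\<in>{0..<n}. if E i j then - v $ j else 0)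
       = (\<Sum>j\<in>{0..<n}. if E i j then v $ i else 0) + (\<Sum>j\<in>{0..<n}. if E i j then - v $ j else 0)" by simp
    also have "\<dots> = (\<Sum>j\<in>{0..<n}. if E i j then v $ i - v $ j else 0)"
      by (simp add: sum.distrib[symmetric] if_distrib, intro sum.cong, auto)
    finally show ?thesis .
  qed
  define Q where "Q = (\<Sum>i\<in>{0..<n}. v $ i * (L *\<^sub>v v) $ i)"
  have Q1: "Q = lam * (\<Sum>i\<in>{0..<n}. (v $ i)^2)"
    unfolding Q_def v(3) using v(1) by (auto simp: sum_distrib_left power2_eq_square mult_ac)
  have Q2: "Q = (\<Sum>i\<in>{0..<n}. \<Sum>j\<in>{0..<n}. if E i j then v $ i * (v $ i - v $ j) else 0)"
    unfolding Q_def by (intro sum.cong refl, simp add: Lv sum_distrib_left if_distrib cong: if_cong)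
  also have "\<dots> = (\<Sum>j\<in>{0..<n}. \<Sum>i\<in>{0..<n}. if E i j then v $ i * (v $ i - v $ j) else 0)"
    by (rule sum.swap)
  also have "\<dots> = (\<Sum>i\<in>{0..<n}. \<Sum>j\<in>{0..<n}. if E i j then v $ j * (v $ j - v $ i) else 0)"
    by (intro sum.cong refl, auto simp: symE)
  finally have Q3: "Q = \<dots>" .
  have "2 * Q = (\<Sum>i\<in>{0..<n}. \<Sum>j\<in>{0..<n}. if E i j then (v $ i - v $ j)^2 else 0)"
  proof -
    have "2 * Q = Q + Q" by simp
    also have "\<dots> = (\<Sum>i\<in>{0..<n}. \<Sum>j\<in>{0..<n}. (if E i j then v $ i * (v $ i - v $ j) else 0) + (if E i j then v $ j * (v $ j - v $ i) else 0))"
      by (subst Q2, subst Q3, simp add: sum.distrib)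
    also have "\<dots> = (\<Sum>i\<in>{0..<n}. \<Sum>j\<in>{0..<n}. if E i j then (v $ i - v $ j)^2 else 0)"
      by (intro sum.cong refl, auto simp: power2_eq_square algebra_simps)
    finally show ?thesis .
  qed
  moreover have "(\<Sum>i\<in>{0..<n}. \<Sum>j\<in>{0..<n}. if E i j then (v $ i - v $ j)^2 else 0) \<ge> 0"
    by (intro sum_nonneg, auto)
  ultimately have "Q \<ge> 0" by simp
  moreover have "(\<Sum>i\<in>{0..<n}. (v $ i)^2) > 0"
    by (rule sum_pos2[of _ i0], insert i0, auto)
  ultimately show ?thesis using Q1 by (metis mult_neg_pos not_le)
qed


lemma eigenvalue_shift:
  fixes A :: "real mat"
  assumes A: "A \<in> carrier_mat n n"
  shows "eigenvalue (A + a \<cdot>\<^sub>m 1\<^sub>m n) x \<longleftrightarrow> eigenvalue A (x - a)"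
proof -
  have "(A + a \<cdot>\<^sub>m 1\<^sub>m n) *\<^sub>v v = (x \<cdot>\<^sub>v v) \<longleftrightarrow> A *\<^sub>v v = (x - a) \<cdot>\<^sub>v v" if v: "v \<in> carrier_vec n" for v
  proof -
    have e: "((A + a \<cdot>\<^sub>m 1\<^sub>m n) *\<^sub>v v) $ i = (A *\<^sub>v v) $ i + a * v $ i" if "i < n" for i
    proof -
      have d: "(\<Sum>ia\<in>{0..<n}. a * (v $ ia * (if ia = i then 1 else 0))) = (\<Sum>ia\<in>{0..<n}. if ia = i then a * v $ ia else 0)"
        by (rule sum.cong, auto)
      show ?thesis using that A v d by (auto simp: scalar_prod_def sum.distrib algebra_simps)
    qed
    show ?thesis using A v by (auto simp: vec_eq_iff e algebra_simps)
  qed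
  thus ?thesis unfolding eigenvalue_def eigenvector_def using A by auto
qed

lemma sorted_second:
  fixes M :: "real multiset"
  assumes "M \<noteq> {#}" "\<forall>x\<in>#M. a \<le> x"
  shows "sorted_list_of_multiset (add_mset a M) ! 1 \<in># M \<and> (\<forall>x\<in>#M. sorted_list_of_multiset (add_mset a M) ! 1 \<le> x)"
proof -
  define xs where "xs = sorted_list_of_multiset M"
  have set: "set xs = set_mset M" unfolding xs_def by simp
  have sxs: "sorted xs" unfolding xs_def by simp
  have ne: "xs \<noteq> []" using assms(1) set by auto
  have "sorted_list_of_multiset (add_mset a M) = a # xs"
    unfolding xs_def sorted_list_of_multiset_insert
    by (rule insort_is_Cons, insert assms(2), auto)
  hence e: "sorted_list_of_multiset (add_mset a M) ! 1 = hd xs" using ne by (cases xs, auto)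
  from ne obtain y ys where xs: "xs = y # ys" by (cases xs, auto)
  show ?thesis unfolding e using set sxs xs by auto
qed



theorem mainTheorem5:
  fixes n :: nat and E :: "nat \<Rightarrow> nat \<Rightarrow> bool"
  assumes "n \<ge> 2" and "simple_graph n E"
  shows "p_star n E = second_smallest_eig (laplacian n E) / real n"
proof -
  obtain m where nm: "n = Suc m" and m1: "m \<ge> 1" using assms(1) by (cases n, auto)
  define L where "L = laplacian n E"
  define J where "J = all_ones n"
  have Lc: "L \<in> carrier_mat n n" unfolding L_def laplacian_def by auto
  have Jc: "J \<in> carrier_mat n n" unfolding J_def all_ones_def by auto
  have irr: "\<And>i. i < n \<Longrightarrow> \<not> E i i" and symE: "\<And>i j. i < n \<Longrightarrow> j < n \<Longrightarrow> E i j = E j i"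
    using assms(2) unfolding simple_graph_def by auto
  have Lsym: "L $$ (i,j) = L $$ (j,i)" if "i < n" "j < n" for i j
    using that symE unfolding L_def laplacian_def by auto
  have rs: "(\<Sum>j\<in>{0..<n}. L $$ (i,j)) = 0" if i: "i < n" for i
  proof -
    have "(\<Sum>j\<in>{0..<n}. L $$ (i,j)) = (\<Sum>j\<in>{0..<n}. (if i = j then real (card {k. k < n \<and> E i k}) else 0) + (if E i j then -1 else 0))"
      using i irr by (intro sum.cong refl, auto simp: L_def laplacian_def)
    also have "\<dots> = real (card {k. k < n \<and> E i k}) + (\<Sum>j\<in>{0..<n}. if E i j then -1 else 0)"
      using i by (simp add: sum.distrib)
    also have "(\<Sum>j\<in>{0..<n}. if E i j then -1 else 0) = (\<Sum>j\<in>{j\<in>{0..<n}. E i j}. (-1::real))"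
      by (rule sum.inter_filter[symmetric], simp)
    also have "{j\<in>{0..<n}. E i j} = {k. k < n \<and> E i k}" by auto
    finally show ?thesis by simp
  qed
  define A' where "A' = mat m m (\<lambda>(i,j). L $$ (Suc i, Suc j) - L $$ (0, Suc j))"
  define g where "g = char_poly A'"
  have A'c: "A' \<in> carrier_mat m m" unfolding A'_def by auto
  have cp: "char_poly (L + a \<cdot>\<^sub>m 1\<^sub>m n + c \<cdot>\<^sub>m J) = [:-(a + c * real n), 1:] * char_poly (A' + a \<cdot>\<^sub>m 1\<^sub>m m)" for a c
    unfolding nm J_def A'_def by (rule charpoly_shift_J, insert Lc rs, auto simp: nm)
  have fne: "char_poly (A' + a \<cdot>\<^sub>m 1\<^sub>m m) \<noteq> 0" for a
  proof -
    have "A' + a \<cdot>\<^sub>m 1\<^sub>m m \<in> carrier_mat m m" using A'c by auto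
    from degree_monic_char_poly[OF this] show ?thesis by auto
  qed
  have froot: "poly (char_poly (A' + a \<cdot>\<^sub>m 1\<^sub>m m)) x = 0 \<longleftrightarrow> poly g (x - a) = 0" for a x
  proof -
    have c: "A' + a \<cdot>\<^sub>m 1\<^sub>m m \<in> carrier_mat m m" using A'c by auto
    show ?thesis unfolding g_def eigenvalue_root_char_poly[OF c, symmetric] eigenvalue_root_char_poly[OF A'c, symmetric]
      by (rule eigenvalue_shift[OF A'c])
  qed
  have LJ0: "L + 0 \<cdot>\<^sub>m 1\<^sub>m n + 0 \<cdot>\<^sub>m J = L" using Lc Jc by (intro eq_matI, auto)
  have A'0: "A' + 0 \<cdot>\<^sub>m 1\<^sub>m m = A'" using A'c by (intro eq_matI, auto)
  have gne: "g \<noteq> 0" using fne[of 0] unfolding A'0 g_def .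
  have cpL: "char_poly L = [:0, 1:] * g"
    using cp[of 0 0] unfolding LJ0 A'0 g_def by simp
  have groot_nonneg: "x \<ge> 0" if "poly g x = 0" for x
  proof -
    have "poly (char_poly L) x = 0" unfolding cpL using that by simp
    hence "eigenvalue L x" using eigenvalue_root_char_poly[OF Lc] by simp
    thus ?thesis using lap_eig_nonneg[OF assms(2)] unfolding L_def by blast
  qed
  have groot_ex: "\<exists>x. poly g x = 0"
  proof -
    have "degree g = m" unfolding g_def using degree_monic_char_poly[OF A'c] by simp
    hence "degree (map_poly complex_of_real g) = m" by simp
    hence "\<not> constant (poly (map_poly complex_of_real g))" using m1 by (simp add: constant_degree)
    then obtain z where z: "poly (map_poly complex_of_real g) z = 0"
      using fundamental_theorem_of_algebra by blast
    have "poly (map_poly complex_of_real (char_poly L)) z = 0"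
      unfolding cpL using z by (simp add: hom_distribs)
    hence "Im z = 0" using sym_real_eig[OF Lc, of z] Lsym by blast
    hence "z = complex_of_real (Re z)" by (simp add: complex_eq_iff)
    with z have "complex_of_real (poly g (Re z)) = 0" by (metis of_real_hom.poly_map_poly)
    thus ?thesis by auto
  qed
  define R where "R = proots g"
  have setR: "set_mset R = {x. poly g x = 0}" unfolding R_def using gne by simp
  define lam where "lam = second_smallest_eig L"
  have "proots ([:0, 1:] * g) = add_mset 0 R" unfolding R_def
    by (subst proots_mult, insert gne, auto simp del: mult_pCons_left)
  hence "asc_eigs L = sorted_list_of_multiset (add_mset 0 R)"
    unfolding asc_eigs_def cpL by simp
  moreover have "R \<noteq> {#}" using groot_ex setR by auto
  moreover have "\<forall>x\<in>#R. 0 \<le> x" using setR groot_nonneg by auto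
  ultimately have lamR: "lam \<in># R" and lam_le: "\<forall>x\<in>#R. lam \<le> x"
    using sorted_second[of R 0] unfolding lam_def second_smallest_eig_def by auto
  have lam_root: "poly g lam = 0" using lamR setR by auto
  have lam_min: "poly g x = 0 \<Longrightarrow> lam \<le> x" for x using lam_le setR by auto
  have lam0: "lam \<ge> 0" using groot_nonneg lam_root by auto
  
  have key: "second_smallest_eig (coupled_Q n E p) = 2 * (real n - 1) * p \<longleftrightarrow> p * real n \<le> lam"
    if p: "p > 0" for p
  proof -
    define Dg where "Dg = L + (p * (real n - 1)) \<cdot>\<^sub>m 1\<^sub>m n"
    define Bc where "Bc = - (p \<cdot>\<^sub>m (J - 1\<^sub>m n))"
    have Dgc: "Dg \<in> carrier_mat n n" and Bcc: "Bc \<in> carrier_mat n n"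
      unfolding Dg_def Bc_def using Lc Jc by auto
    have Q: "coupled_Q n E p = four_block_mat Dg Bc Bc Dg"
      unfolding coupled_Q_def Dg_def Bc_def L_def J_def Let_def ..
    have e1: "Dg + Bc = L + (p * real n) \<cdot>\<^sub>m 1\<^sub>m n + (-p) \<cdot>\<^sub>m J"
      unfolding Dg_def Bc_def using Lc Jc by (intro eq_matI, auto simp: J_def all_ones_def algebra_simps)
    have e2: "Dg - Bc = L + (p * (real n - 2)) \<cdot>\<^sub>m 1\<^sub>m n + p \<cdot>\<^sub>m J"
      unfolding Dg_def Bc_def using Lc Jc by (intro eq_matI, auto simp: J_def all_ones_def algebra_simps)
    define f1 where "f1 = char_poly (A' + (p * real n) \<cdot>\<^sub>m 1\<^sub>m m)"
    define f2 where "f2 = char_poly (A' + (p * (real n - 2)) \<cdot>\<^sub>m 1\<^sub>m m)"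
    define c0 where "c0 = 2 * (real n - 1) * p"
    have cpQ: "char_poly (coupled_Q n E p) = ([:0, 1:] * f1) * ([:- c0, 1:] * f2)"
      unfolding Q char_poly_sym_block[OF Dgc Bcc] e1 e2 cp f1_def f2_def c0_def
      by (simp add: algebra_simps)
    define M' where "M' = add_mset c0 (proots f1 + proots f2)"
    have f1ne: "f1 \<noteq> 0" and f2ne: "f2 \<noteq> 0" unfolding f1_def f2_def using fne by auto
    have pa: "proots ([:0, 1:] * f1) = add_mset 0 (proots f1)"
      by (subst proots_mult, insert f1ne, auto simp del: mult_pCons_left)
    have pb: "proots ([:-c0, 1:] * f2) = add_mset c0 (proots f2)"
      by (subst proots_mult, insert f2ne, auto simp del: mult_pCons_left)
    have nza: "[:0, 1:] * f1 \<noteq> 0" using f1ne by (simp del: mult_pCons_left)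
    have nzb: "[:-c0, 1:] * f2 \<noteq> 0" using f2ne by (simp del: mult_pCons_left)
    have "proots (([:0, 1:] * f1) * ([:-c0, 1:] * f2)) = add_mset 0 M'"
      unfolding proots_mult[OF nza nzb] pa pb M'_def by simp
    hence "asc_eigs (coupled_Q n E p) = sorted_list_of_multiset (add_mset 0 M')"
      unfolding asc_eigs_def cpQ by simp
    moreover have "M' \<noteq> {#}" unfolding M'_def by simp
    moreover have n2: "real n \<ge> 2" using assms(1) by simp
    have set1: "x \<in># proots f1 \<longleftrightarrow> poly g (x - p * real n) = 0" for x
      using f1ne froot unfolding f1_def by simp
    have set2: "x \<in># proots f2 \<longleftrightarrow> poly g (x - p * (real n - 2)) = 0" for x
      using f2ne froot unfolding f2_def by simp
    have M'ge: "\<forall>x\<in>#M'. 0 \<le> x"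
    proof
      fix x assume "x \<in># M'"
      hence "x = c0 \<or> x \<in># proots f1 \<or> x \<in># proots f2" unfolding M'_def by auto
      thus "0 \<le> x"
      proof (elim disjE)
        assume "x = c0" thus ?thesis using p n2 unfolding c0_def by simp
      next
        assume "x \<in># proots f1"
        hence "x - p * real n \<ge> 0" using set1 groot_nonneg by blast
        thus ?thesis using p n2 by (smt (verit) mult_nonneg_nonneg)
      next
        assume "x \<in># proots f2"
        hence "x - p * (real n - 2) \<ge> 0" using set2 groot_nonneg by blast
        thus ?thesis using p n2 by (smt (verit) mult_nonneg_nonneg)
      qed
    qed
    ultimately have vM: "second_smallest_eig (coupled_Q n E p) \<in># M'"
      and vle: "\<forall>x\<in>#M'. second_smallest_eig (coupled_Q n E p) \<le> x"
      using sorted_second[of M' 0] unfolding second_smallest_eig_def by auto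
    define v where "v = second_smallest_eig (coupled_Q n E p)"
    have vM': "v \<in># M'" and vle': "\<And>x. x \<in># M' \<Longrightarrow> v \<le> x" using vM vle unfolding v_def by auto
    show ?thesis unfolding v_def[symmetric] c0_def[symmetric]
    proof
      assume vc: "v = c0"
      have "lam + p * (real n - 2) \<in># proots f2" using set2 lam_root by simp
      hence "v \<le> lam + p * (real n - 2)" using vle' unfolding M'_def by auto
      thus "p * real n \<le> lam" using vc unfolding c0_def by (simp add: algebra_simps)
    next
      assume pl: "p * real n \<le> lam"
      have "v \<le> c0" using vle' unfolding M'_def by auto
      moreover have "v \<ge> c0"
      proof -
        have "v = c0 \<or> v \<in># proots f1 \<or> v \<in># proots f2" using vM' unfolding M'_def by auto
        thus ?thesis
        proof (elim disjE)
          assume "v \<in># proots f1"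
          hence "lam \<le> v - p * real n" using set1 lam_min by blast
          thus ?thesis using pl p n2 unfolding c0_def by (simp add: algebra_simps)
        next
          assume "v \<in># proots f2"
          hence "lam \<le> v - p * (real n - 2)" using set2 lam_min by blast
          thus ?thesis using pl p n2 unfolding c0_def by (simp add: algebra_simps)
        qed simp
      qed
      ultimately show "v = c0" by simp
    qed
  qed
  have set_eq: "{p. p > 0 \<and> second_smallest_eig (coupled_Q n E p) = 2 * (real n - 1) * p}
      = {p. p > 0 \<and> p * real n \<le> lam}"
    using key by auto
  have np: "real n > 0" using assms(1) by simp
  have ps: "p_star n E = Sup ({0} \<union> {p. p > 0 \<and> p * real n \<le> lam})" unfolding p_star_def set_eq ..
  have lamL: "second_smallest_eig (laplacian n E) = lam" unfolding lam_def L_def ..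
  show ?thesis
  proof (cases "lam = 0")
    case True
    have "{p. p > 0 \<and> p * real n \<le> lam} = {}" using True np
      by (auto simp: not_le intro: mult_pos_pos)
    hence "{0} \<union> {p. p > 0 \<and> p * real n \<le> lam} = {0}" by (simp only: Un_empty_right)
    hence "p_star n E = Sup {0}" unfolding ps by (simp only:)
    thus ?thesis unfolding lamL using True by simp
  next
    case False
    hence lp: "lam > 0" using lam0 by simp
    have "{0} \<union> {p. p > 0 \<and> p * real n \<le> lam} = {0..lam / real n}"
      using np lp by (auto simp: field_simps)
    moreover have "Sup {0..lam / real n} = lam / real n"
      by (rule cSup_atLeastAtMost, insert np lp, simp)
    ultimately show ?thesis unfolding ps lamL by simp
  qed
qed


end
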